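(* Let $Y,Z$ be finite-dimensional real or complex vector spaces, let $f$ be a vector field on $Y$, let $F\colon Y\to Z$ be quadratic, and let $g,\gamma$ be vector fields on $Z$ such that $F'(y)f(y)=g(F(y))$ and $F''(f(y),f(y))=\gamma(F(y))$ for all $y\in Y$. Let nonzero $b_1,\dots,b_s$ and $h>0$ be given, and suppose $y_0,y_1,Y_1,\dots,Y_s\in Y$ satisfy the SyDIRK equations \[ Y_i = y_0 + h\sum_{j=1}^{i-1} b_j f(Y_j) + \frac h2 b_i f(Y_i)\ (i=1,\dots,s),\qquad y_1 = y_0 + h\sum_{i=1}^s b_i f(Y_i). \] Then $z_0:=F(y_0)$, $Z_i:=F(Y_i)$, $z_1:=F(y_1)$ satisfy \[ Z_i = z_0 + h\sum_{j=1}^{i-1} b_j g(Z_j) + \frac h2 b_i g(Z_i) - \frac{h^2}{8} b_i^2\gamma(Z_i)\ (i=1,\dots,s),\qquad z_1 = z_0 + h\sum_{i=1}^s b_i g(Z_i). \]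
   Context: A map $F\colon Y\to Z$ is quadratic if for every $y_0\in Y$, $F(y)=F(y_0)+F'(y_0)(y-y_0)+\tfrac12F''(y-y_0,y-y_0)$ for all $y$, with $F''$ a constant symmetric bilinear map $Y\times Y\to Z$. *)

theory Defs
  imports "HOL-Analysis.Analysis"
begin

definition quadratic_map ::
  "('y::real_vector \<Rightarrow> 'z::real_vector) \<Rightarrow> ('y \<Rightarrow> 'y \<Rightarrow> 'z) \<Rightarrow> ('y \<Rightarrow> 'y \<Rightarrow> 'z) \<Rightarrow> bool" where
  "quadratic_map F F' F'' \<longleftrightarrow>
     (\<forall>y0. linear (F' y0)) \<and> bilinear F'' \<and> (\<forall>u v. F'' u v = F'' v u) \<and>
     (\<forall>y0 y. F y = F y0 + F' y0 (y - y0) + (1/2) *\<^sub>R F'' (y - y0) (y - y0))"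

end

theory Submission
  imports Defs
begin

lemma quad_step:
  assumes quad: "quadratic_map F F' F''"
  shows "F (Y + c *\<^sub>R v) = F Y + c *\<^sub>R F' Y v + (c\<^sup>2 / 2) *\<^sub>R F'' v v"
proof -
  have lin: "linear (F' Y)" and bl: "bilinear F''" and ex: "F (Y + c *\<^sub>R v) = F Y + F' Y (c *\<^sub>R v) + (1/2) *\<^sub>R F'' (c *\<^sub>R v) (c *\<^sub>R v)"
    using quad unfolding quadratic_map_def by (auto simp del: add_diff_cancel_left' add_diff_cancel_left)
    (metis add_diff_cancel_left')
  have "F' Y (c *\<^sub>R v) = c *\<^sub>R F' Y v" using lin by (simp add: linear_scale)
  moreover have "F'' (c *\<^sub>R v) (c *\<^sub>R v) = (c * c) *\<^sub>R F'' v v"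
    using bl by (simp add: bilinear_lmul bilinear_rmul)
  ultimately show ?thesis using ex by (simp add: power2_eq_square)
qed

theorem corollary2p8:
  fixes f :: "'y::euclidean_space \<Rightarrow> 'y"
    and F :: "'y \<Rightarrow> 'z::euclidean_space"
    and F' :: "'y \<Rightarrow> 'y \<Rightarrow> 'z" and F'' :: "'y \<Rightarrow> 'y \<Rightarrow> 'z"
    and g \<gamma> :: "'z \<Rightarrow> 'z"
    and s :: nat and b :: "nat \<Rightarrow> real" and h :: real
    and y0 y1 :: 'y and Ys :: "nat \<Rightarrow> 'y"
  assumes quad: "quadratic_map F F' F''"
    and hg: "\<And>y. F' y (f y) = g (F y)"
    and hgamma: "\<And>y. F'' (f y) (f y) = \<gamma> (F y)"
    and b_nz: "\<And>i. i \<in> {1..s} \<Longrightarrow> b i \<noteq> 0"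
    and h_pos: "h > 0"
    and stages: "\<And>i. i \<in> {1..s} \<Longrightarrow>
       Ys i = y0 + h *\<^sub>R (\<Sum>j\<in>{1..<i}. b j *\<^sub>R f (Ys j)) + (h / 2 * b i) *\<^sub>R f (Ys i)"
    and step: "y1 = y0 + h *\<^sub>R (\<Sum>i\<in>{1..s}. b i *\<^sub>R f (Ys i))"
  shows "(\<forall>i\<in>{1..s}.
            F (Ys i) = F y0 + h *\<^sub>R (\<Sum>j\<in>{1..<i}. b j *\<^sub>R g (F (Ys j)))
                       + (h / 2 * b i) *\<^sub>R g (F (Ys i))
                       - (h\<^sup>2 / 8 * (b i)\<^sup>2) *\<^sub>R \<gamma> (F (Ys i)))
         \<and> F y1 = F y0 + h *\<^sub>R (\<Sum>i\<in>{1..s}. b i *\<^sub>R g (F (Ys i)))"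
proof -
  define P where "P j = y0 + h *\<^sub>R (\<Sum>l\<in>{1..<j}. b l *\<^sub>R f (Ys l))" for j
  define Q where "Q j = F y0 + h *\<^sub>R (\<Sum>l\<in>{1..<j}. b l *\<^sub>R g (F (Ys l)))" for j
  have PS: "P (Suc i) = P i + (h * b i) *\<^sub>R f (Ys i)" if "i \<ge> 1" for i
    using that by (simp add: P_def scaleR_add_right)
  have QS: "Q (Suc i) = Q i + (h * b i) *\<^sub>R g (F (Ys i))" if "i \<ge> 1" for i
    using that by (simp add: Q_def scaleR_add_right)
  have YP: "Ys i = P i + (h / 2 * b i) *\<^sub>R f (Ys i)" if "i \<in> {1..s}" for i
    using stages[OF that] by (simp add: P_def)
  have lo: "F (P i) = F (Ys i) - (h / 2 * b i) *\<^sub>R g (F (Ys i)) + ((h / 2 * b i)\<^sup>2 / 2) *\<^sub>R \<gamma> (F (Ys i))"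
    if "i \<in> {1..s}" for i
  proof -
    have "P i = Ys i + (- (h / 2 * b i)) *\<^sub>R f (Ys i)" using YP[OF that] by (simp add: algebra_simps)
    then show ?thesis using quad_step[OF quad, of "Ys i" "- (h / 2 * b i)" "f (Ys i)"]
      by (simp add: hg hgamma)
  qed
  have hi: "F (P (Suc i)) = F (Ys i) + (h / 2 * b i) *\<^sub>R g (F (Ys i)) + ((h / 2 * b i)\<^sup>2 / 2) *\<^sub>R \<gamma> (F (Ys i))"
    if "i \<in> {1..s}" for i
  proof -
    have sp: "(h * b i) *\<^sub>R f (Ys i) = (h / 2 * b i) *\<^sub>R f (Ys i) + (h / 2 * b i) *\<^sub>R f (Ys i)"
      by (simp flip: scaleR_add_left)
    have "P (Suc i) = Ys i + (h / 2 * b i) *\<^sub>R f (Ys i)"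
      using PS[of i] that by (subst YP[OF that]) (simp add: sp algebra_simps)
    then show ?thesis using quad_step[OF quad, of "Ys i" "(h / 2 * b i)" "f (Ys i)"]
      by (simp add: hg hgamma)
  qed
  have tel: "F (P n) = Q n" if "1 \<le> n" "n \<le> Suc s" for n
    using that
  proof (induction n)
    case 0 then show ?case by simp
  next
    case (Suc n)
    show ?case
    proof (cases "n = 0")
      case True then show ?thesis by (simp add: P_def Q_def)
    next
      case False
      then have n: "n \<in> {1..s}" using Suc by auto
      have "F (P (Suc n)) = F (P n) + (h * b n) *\<^sub>R g (F (Ys n))"
      proof -
        have sp: "(h * b n) *\<^sub>R g (F (Ys n)) = (h / 2 * b n) *\<^sub>R g (F (Ys n)) + (h / 2 * b n) *\<^sub>R g (F (Ys n))"
          by (simp flip: scaleR_add_left)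
        show ?thesis unfolding hi[OF n] lo[OF n] sp by (simp add: algebra_simps)
      qed
      then show ?thesis using Suc n QS[of n] by auto
    qed
  qed
  have A: "\<forall>i\<in>{1..s}.
            F (Ys i) = F y0 + h *\<^sub>R (\<Sum>j\<in>{1..<i}. b j *\<^sub>R g (F (Ys j)))
                       + (h / 2 * b i) *\<^sub>R g (F (Ys i))
                       - (h\<^sup>2 / 8 * (b i)\<^sup>2) *\<^sub>R \<gamma> (F (Ys i))"
  proof
    fix i assume i: "i \<in> {1..s}"
    have "F (P i) = Q i" using tel[of i] i by auto
    then have "Q i = F (Ys i) - (h / 2 * b i) *\<^sub>R g (F (Ys i)) + ((h / 2 * b i)\<^sup>2 / 2) *\<^sub>R \<gamma> (F (Ys i))"
      using lo[OF i] by simp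
    then have "F (Ys i) = Q i + (h / 2 * b i) *\<^sub>R g (F (Ys i)) - ((h / 2 * b i)\<^sup>2 / 2) *\<^sub>R \<gamma> (F (Ys i))"
      by (simp add: algebra_simps)
    moreover have "(h / 2 * b i)\<^sup>2 / 2 = h\<^sup>2 / 8 * (b i)\<^sup>2" by (simp add: power2_eq_square)
    ultimately show "F (Ys i) = F y0 + h *\<^sub>R (\<Sum>j\<in>{1..<i}. b j *\<^sub>R g (F (Ys j)))
                       + (h / 2 * b i) *\<^sub>R g (F (Ys i))
                       - (h\<^sup>2 / 8 * (b i)\<^sup>2) *\<^sub>R \<gamma> (F (Ys i))" unfolding Q_def by metis
  qed
  have "y1 = P (Suc s)" using step by (simp add: P_def atLeastLessThanSuc_atLeastAtMost)
  then have "F y1 = Q (Suc s)" using tel[of "Suc s"] by simp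
  then have B: "F y1 = F y0 + h *\<^sub>R (\<Sum>i\<in>{1..s}. b i *\<^sub>R g (F (Ys i)))"
    by (simp add: Q_def atLeastLessThanSuc_atLeastAtMost)
  show ?thesis using A B by blast
qed

end
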